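(* $\{\omega^2, (\omega^2)^\star\} \leq_c \{\omega^3, (\omega^3)^\star\}$.
   Context: Structures have domains contained in $\omega$. For countable structures $\mathcal{A},\mathcal{B}$, the class $\{\mathcal{A},\mathcal{B}\}$ denotes the class of all structures (with domain $\subseteq\omega$) isomorphic to $\mathcal{A}$ or to $\mathcal{B}$. Linear orders are in the language $\{<\}$; $L^\star$ is the reverse of a linear order $L$; $\omega^2$, $\omega^3$ are ordinal order types. An enumeration operator $\Gamma$ is a c.e. set of pairs $(\alpha,\varphi)$ with $\alpha$ a finite set of basic (atomic or negated atomic) sentences of the input language with constants from $\omega$ and $\varphi$ a basic sentence of the output language with constants from $\omega$; $\Gamma(X)=\{\varphi : (\alpha,\varphi)\in\Gamma,\ \alpha\subseteq X\}$. $\Gamma$ is a computable embedding of $\mathcal{K}_0$ into $\mathcal{K}_1$ ($\mathcal{K}_0\leq_c\mathcal{K}_1$) if for every $\mathcal{A}\in\mathcal{K}_0$, $\Gamma$ applied to the atomic diagram of $\mathcal{A}$ is the atomic diagram of a structure $\Gamma(\mathcal{A})\in\mathcal{K}_1$, and for all $\mathcal{A},\mathcal{B}\in\mathcal{K}_0$, $\mathcal{A}\cong\mathcal{B}$ iff $\Gamma(\mathcal{A})\cong\Gamma(\mathcal{B})$. *)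

theory Defs
  imports Main "HOL-Library.Nat_Bijection"
begin

datatype recf =
    Zero
  | Succ
  | Proj nat
  | Comp recf "recf list"
  | Prim recf recf
  | Mu recf

inductive reval :: "recf \<Rightarrow> nat list \<Rightarrow> nat \<Rightarrow> bool" where
  reval_zero: "reval Zero xs 0"
| reval_succ: "reval Succ (x # xs) (Suc x)"
| reval_proj: "i < length xs \<Longrightarrow> reval (Proj i) xs (xs ! i)"
| reval_comp: "length ys = length gs \<Longrightarrow> (\<forall>i. i < length gs \<longrightarrow> reval (gs ! i) xs (ys ! i))
     \<Longrightarrow> reval f ys z \<Longrightarrow> reval (Comp f gs) xs z"
| reval_prim0: "reval f xs y \<Longrightarrow> reval (Prim f g) (0 # xs) y"
| reval_primS: "reval (Prim f g) (n # xs) y \<Longrightarrow> reval g (n # y # xs) z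
     \<Longrightarrow> reval (Prim f g) (Suc n # xs) z"
| reval_mu: "reval f (n # xs) 0 \<Longrightarrow> (\<forall>m. m < n \<longrightarrow> (\<exists>y. reval f (m # xs) y \<and> 0 < y))
     \<Longrightarrow> reval (Mu f) xs n"

definition ce_set :: "nat set \<Rightarrow> bool" where
  "ce_set A \<longleftrightarrow> (\<exists>f. A = {n. \<exists>y. reval f [n] y})"

datatype atom = Lt nat nat | Eq nat nat
datatype basic = Pos atom | Neg atom

fun code_atom :: "atom \<Rightarrow> nat" where
  "code_atom (Lt a b) = 2 * prod_encode (a, b)"
| "code_atom (Eq a b) = 2 * prod_encode (a, b) + 1"

fun code_basic :: "basic \<Rightarrow> nat" where
  "code_basic (Pos x) = 2 * code_atom x"
| "code_basic (Neg x) = 2 * code_atom x + 1"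

definition canon :: "nat set \<Rightarrow> nat" where
  "canon S = (\<Sum>x\<in>S. 2 ^ x)"

text \<open>A structure is a pair (D, R): domain D \<subseteq> omega and interpretation R of <, with R \<subseteq> D \<times> D.\<close>
type_synonym struc = "nat set \<times> (nat \<times> nat) set"

definition is_struc :: "struc \<Rightarrow> bool" where
  "is_struc A \<longleftrightarrow> snd A \<subseteq> fst A \<times> fst A"

definition iso :: "struc \<Rightarrow> struc \<Rightarrow> bool" where
  "iso A B \<longleftrightarrow> (\<exists>f. bij_betw f (fst A) (fst B) \<and>
     (\<forall>a\<in>fst A. \<forall>b\<in>fst A. (a, b) \<in> snd A \<longleftrightarrow> (f a, f b) \<in> snd B))"

definition diag :: "struc \<Rightarrow> basic set" where
  "diag A = {Pos (Lt a b) | a b. a \<in> fst A \<and> b \<in> fst A \<and> (a, b) \<in> snd A}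
          \<union> {Neg (Lt a b) | a b. a \<in> fst A \<and> b \<in> fst A \<and> (a, b) \<notin> snd A}
          \<union> {Pos (Eq a a) | a. a \<in> fst A}
          \<union> {Neg (Eq a b) | a b. a \<in> fst A \<and> b \<in> fst A \<and> a \<noteq> b}"

definition class2 :: "struc \<Rightarrow> struc \<Rightarrow> struc set" where
  "class2 A B = {C. is_struc C \<and> (iso C A \<or> iso C B)}"

type_synonym enum_op = "(basic set \<times> basic) set"

definition enum_operator :: "enum_op \<Rightarrow> bool" where
  "enum_operator \<Gamma> \<longleftrightarrow> (\<forall>(\<alpha>, \<phi>) \<in> \<Gamma>. finite \<alpha>) \<and>
     ce_set ((\<lambda>(\<alpha>, \<phi>). prod_encode (canon (code_basic ` \<alpha>), code_basic \<phi>)) ` \<Gamma>)"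

definition apply_op :: "enum_op \<Rightarrow> basic set \<Rightarrow> basic set" where
  "apply_op \<Gamma> X = {\<phi>. \<exists>\<alpha>. (\<alpha>, \<phi>) \<in> \<Gamma> \<and> \<alpha> \<subseteq> X}"

definition computable_embedding :: "enum_op \<Rightarrow> struc set \<Rightarrow> struc set \<Rightarrow> bool" where
  "computable_embedding \<Gamma> K0 K1 \<longleftrightarrow> enum_operator \<Gamma> \<and>
     (\<forall>A\<in>K0. \<exists>C\<in>K1. apply_op \<Gamma> (diag A) = diag C) \<and>
     (\<forall>A\<in>K0. \<forall>B\<in>K0. \<forall>CA\<in>K1. \<forall>CB\<in>K1.
        apply_op \<Gamma> (diag A) = diag CA \<longrightarrow> apply_op \<Gamma> (diag B) = diag CB \<longrightarrow>
        (iso A B \<longleftrightarrow> iso CA CB))"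

definition c_reducible :: "struc set \<Rightarrow> struc set \<Rightarrow> bool" (infix "\<le>\<^sub>c" 50) where
  "K0 \<le>\<^sub>c K1 \<longleftrightarrow> (\<exists>\<Gamma>. computable_embedding \<Gamma> K0 K1)"

definition omega2 :: struc where
  "omega2 = (UNIV, {(a, b). let (m1, n1) = prod_decode a; (m2, n2) = prod_decode b
                             in m1 < m2 \<or> (m1 = m2 \<and> n1 < n2)})"

fun dec3 :: "nat \<Rightarrow> nat \<times> nat \<times> nat" where
  "dec3 a = (let (m, k) = prod_decode a in (m, prod_decode k))"

definition omega3 :: struc where
  "omega3 = (UNIV, {(a, b). let (m1, n1, p1) = dec3 a; (m2, n2, p2) = dec3 b
                             in m1 < m2 \<or> (m1 = m2 \<and> (n1 < n2 \<or> (n1 = n2 \<and> p1 < p2)))})"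

definition reverse :: "struc \<Rightarrow> struc" where
  "reverse A = (fst A, {(b, a). (a, b) \<in> snd A})"

end

theory Submission
  imports Defs
begin


inductive_cases reval_ZeroE: "reval Zero xs y"
inductive_cases reval_SuccE: "reval Succ xs y"
inductive_cases reval_ProjE: "reval (Proj i) xs y"
inductive_cases reval_CompE: "reval (Comp f gs) xs y"
inductive_cases reval_Prim0E: "reval (Prim f g) (0 # xs) y"
inductive_cases reval_PrimSE: "reval (Prim f g) (Suc n # xs) y"
inductive_cases reval_MuE: "reval (Mu f) xs y"

lemma reval_proj': "i < length xs \<Longrightarrow> xs ! i = y \<Longrightarrow> reval (Proj i) xs y"
  using reval_proj by auto

lemma reval_det: "reval f xs y \<Longrightarrow> reval f xs z \<Longrightarrow> y = z"
proof (induct arbitrary: z rule: reval.induct)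
  case (reval_zero xs) then show ?case by (auto elim: reval_ZeroE)
next
  case (reval_succ x xs) then show ?case by (auto elim: reval_SuccE)
next
  case (reval_proj i xs) then show ?case by (auto elim: reval_ProjE)
next
  case (reval_comp ys gs xs f z0 z)
  from reval_comp(5) obtain ys' where l: "length ys' = length gs"
    and a: "\<forall>i<length gs. reval (gs ! i) xs (ys' ! i)" and r: "reval f ys' z"
    by (auto elim: reval_CompE)
  have "ys = ys'"
  proof (rule nth_equalityI)
    show "length ys = length ys'" using reval_comp(1) l by simp
    fix i assume "i < length ys"
    then have "i < length gs" using reval_comp(1) by simp
    then show "ys ! i = ys' ! i" using reval_comp(2) a by blast
  qed
  then show ?case using reval_comp(4) r by blast
next
  case (reval_prim0 f xs y g z)
  from reval_prim0(3) have "reval f xs z" by (auto elim: reval_Prim0E)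
  then show ?case using reval_prim0(2) by blast
next
  case (reval_primS f g n xs y z0 z)
  from reval_primS(5) obtain y' where 1: "reval (Prim f g) (n # xs) y'" and 2: "reval g (n # y' # xs) z"
    by (elim reval_PrimSE) auto
  from reval_primS(2)[OF 1] have "y = y'" .
  with reval_primS(4) 2 show ?case by blast
next
  case (reval_mu f n xs z)
  from reval_mu(4) have h1: "reval f (z # xs) 0" and h2: "\<forall>m<z. \<exists>y. reval f (m # xs) y \<and> 0 < y"
    by (auto elim: reval_MuE)
  show ?case
  proof (rule ccontr)
    assume "n \<noteq> z"
    then consider "n < z" | "z < n" by arith
    then show False
    proof cases
      case 1 with h2 obtain y where "reval f (n # xs) y" "0 < y" by blast
      with reval_mu(2) show False by fastforce
    next
      case 2 with reval_mu(3) obtain y where "reval f (z # xs) y" "0 < y" "\<And>w. reval f (z # xs) w \<Longrightarrow> y = w" by blast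
      with h1 show False by fastforce
    qed
  qed
qed

lemma reval_compI: "list_all2 (\<lambda>g y. reval g xs y) gs ys \<Longrightarrow> reval f ys z \<Longrightarrow> reval (Comp f gs) xs z"
  by (rule reval_comp) (auto simp: list_all2_conv_all_nth)

lemma projs_all2: "list_all2 (\<lambda>g y. reval g (pre @ xs) y) (map (\<lambda>j. Proj (j + length pre)) [0..<length xs]) xs"
  by (auto simp: list_all2_conv_all_nth nth_append intro!: reval_proj')

lemma projs_all2_0: "list_all2 (\<lambda>g y. reval g xs y) (map Proj [0..<length xs]) xs"
  using projs_all2[of "[]" xs] by simp

definition add_code where "add_code = Prim (Proj 0) (Comp Succ [Proj 1])"
lemma add_code: "reval add_code [n, x] (n + x)"
  unfolding add_code_def
proof (induction n)
  case 0 show ?case by (rule reval_prim0) (rule reval_proj', auto)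
next
  case (Suc n)
  show ?case
    apply (rule reval_primS[OF Suc])
    apply (rule reval_compI[where ys="[n+x]"])
     apply (simp add: reval_proj[of 1 "[n, n+x, x]", simplified])
    using reval_succ[of "n+x" "[]"] by simp
qed

definition mul_code where "mul_code = Prim Zero (Comp add_code [Proj 2, Proj 1])"
lemma mul_code: "reval mul_code [n, x] (n * x)"
  unfolding mul_code_def
proof (induction n)
  case 0 show ?case by (rule reval_prim0) (simp add: reval_zero)
next
  case (Suc n)
  show ?case
    apply (rule reval_primS[OF Suc])
    apply (rule reval_compI[where ys="[x, n*x]"])
    using reval_proj[of 2 "[n, n*x, x]"] reval_proj[of 1 "[n, n*x, x]"] add_code[of x "n*x"] by auto
qed

definition pred_code where "pred_code = Prim Zero (Proj 0)"
lemma pred_code: "reval pred_code [n] (n - 1)"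
  unfolding pred_code_def
proof (induction n)
  case 0 show ?case by (auto intro!: reval_prim0 reval_zero)
next
  case (Suc n) show ?case by (rule reval_primS[OF Suc]) (auto intro!: reval_proj')
qed

definition monus_code where "monus_code = Prim (Proj 0) (Comp pred_code [Proj 1])"
lemma monus_code: "reval monus_code [n, x] (x - n)"
  unfolding monus_code_def
proof (induction n)
  case 0 show ?case by (rule reval_prim0) (rule reval_proj', auto)
next
  case (Suc n)
  show ?case
    apply (rule reval_primS[OF Suc])
    apply (rule reval_compI[where ys="[x - n]"])
    using reval_proj[of 1 "[n, x - n, x]"] pred_code[of "x - n"] by auto
qed

definition sg_code where "sg_code = Prim Zero (Comp Succ [Zero])"
lemma sg_code: "reval sg_code [n] (if n = 0 then 0 else 1)"
  unfolding sg_code_def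
proof (induction n)
  case 0 show ?case by (auto intro!: reval_prim0 reval_zero)
next
  case (Suc n) show ?case by (rule reval_primS[OF Suc]) 
     (auto intro!: reval_compI reval_zero intro: reval_succ[of 0 "[]", simplified])
qed

lemma sg_code': "v = (if n = 0 then 0 else 1) \<Longrightarrow> reval sg_code [n] v"
  using sg_code by simp

definition tri_code where "tri_code = Prim Zero (Comp add_code [Comp Succ [Proj 0], Proj 1])"
lemma tri_code: "reval tri_code [n] (triangle n)"
  unfolding tri_code_def
proof (induction n)
  case 0 show ?case by (auto intro!: reval_prim0 reval_zero)
next
  case (Suc n)
  show ?case
    apply (rule reval_primS[OF Suc])
    apply (rule reval_compI[where ys="[Suc n, triangle n]"])
    using reval_proj[of 0 "[n, triangle n]"] reval_proj[of 1 "[n, triangle n]"]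
      add_code[of "Suc n" "triangle n"] reval_succ[of n "[]"]
    by (auto intro!: reval_compI[where ys="[n]"] simp: add.commute)
qed

definition pw2_code where "pw2_code = Prim (Comp Succ [Zero]) (Comp add_code [Proj 1, Proj 1])"
lemma pw2_code: "reval pw2_code [n] (2 ^ n)"
  unfolding pw2_code_def
proof (induction n)
  case 0 show ?case by (auto intro!: reval_prim0 reval_zero reval_compI intro: reval_succ[of 0 "[]", simplified])
next
  case (Suc n)
  show ?case
    apply (rule reval_primS[OF Suc])
    apply (rule reval_compI[where ys="[2^n, 2^n]"])
    using reval_proj[of 1 "[n, 2^n]"] add_code[of "2^n" "2^n"] by (auto simp: mult_2)
qed

fun constc :: "nat \<Rightarrow> recf" where
  "constc 0 = Zero" | "constc (Suc n) = Comp Succ [constc n]"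
lemma constc: "reval (constc n) xs n"
  by (induction n) (auto intro!: reval_zero reval_compI intro: reval_succ[of _ "[]", simplified])


lemma projs_all2_2: "list_all2 (\<lambda>g y. reval g (a # b # xs) y) (map (\<lambda>j. Proj (Suc (Suc j))) [0..<length xs]) xs"
  using projs_all2[of "[a,b]" xs] by simp

datatype ex = V nat | Cn nat | Add ex ex | Mul ex ex | Sub ex ex | Tri ex | Pw2 ex | Sg ex | BE ex ex

fun ev :: "ex \<Rightarrow> nat list \<Rightarrow> nat" where
  "ev (V i) xs = xs ! i"
| "ev (Cn n) xs = n"
| "ev (Add a b) xs = ev a xs + ev b xs"
| "ev (Mul a b) xs = ev a xs * ev b xs"
| "ev (Sub a b) xs = ev a xs - ev b xs"
| "ev (Tri a) xs = triangle (ev a xs)"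
| "ev (Pw2 a) xs = 2 ^ ev a xs"
| "ev (Sg a) xs = (if ev a xs = 0 then 0 else 1)"
| "ev (BE b e) xs = (if \<exists>i\<le>ev b xs. ev e (xs @ [i]) \<noteq> 0 then 1 else 0)"

fun ws :: "nat \<Rightarrow> ex \<Rightarrow> bool" where
  "ws k (V i) = (i < k)"
| "ws k (Cn n) = True"
| "ws k (Add a b) = (ws k a \<and> ws k b)"
| "ws k (Mul a b) = (ws k a \<and> ws k b)"
| "ws k (Sub a b) = (ws k a \<and> ws k b)"
| "ws k (Tri a) = ws k a"
| "ws k (Pw2 a) = ws k a"
| "ws k (Sg a) = ws k a"
| "ws k (BE b e) = (ws k b \<and> ws (Suc k) e)"

definition be_base where "be_base k E = Comp sg_code [Comp E (map Proj [0..<k] @ [Zero])]"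
definition be_step where "be_step k E = Comp sg_code [Comp add_code [Proj 1,
    Comp E (map (\<lambda>j. Proj (j + 2)) [0..<k] @ [Comp Succ [Proj 0]])]]"

fun cmp :: "nat \<Rightarrow> ex \<Rightarrow> recf" where
  "cmp k (V i) = Proj i"
| "cmp k (Cn n) = constc n"
| "cmp k (Add a b) = Comp add_code [cmp k a, cmp k b]"
| "cmp k (Mul a b) = Comp mul_code [cmp k a, cmp k b]"
| "cmp k (Sub a b) = Comp monus_code [cmp k b, cmp k a]"
| "cmp k (Tri a) = Comp tri_code [cmp k a]"
| "cmp k (Pw2 a) = Comp pw2_code [cmp k a]"
| "cmp k (Sg a) = Comp sg_code [cmp k a]"
| "cmp k (BE b e) = Comp (Prim (be_base k (cmp (Suc k) e)) (be_step k (cmp (Suc k) e)))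
     (cmp k b # map Proj [0..<k])"

lemma be_prim:
  assumes E: "\<And>ys. length ys = Suc (length xs) \<Longrightarrow> reval E ys (f ys)"
  shows "reval (Prim (be_base (length xs) E) (be_step (length xs) E)) (n # xs)
           (if \<exists>i\<le>n. f (xs @ [i]) \<noteq> 0 then 1 else 0)"
proof (induction n)
  case 0
  have "reval (Comp E (map Proj [0..<length xs] @ [Zero])) xs (f (xs @ [0]))"
    by (rule reval_compI[OF _ E]) (auto intro!: list_all2_appendI projs_all2_0 reval_zero)
  then show ?case unfolding be_base_def
    by (auto intro!: reval_prim0 reval_compI sg_code')
next
  case (Suc n)
  have 1: "reval (Comp E (map (\<lambda>j. Proj (Suc (Suc j))) [0..<length xs] @ [Comp Succ [Proj 0]])) (n # y # xs) (f (xs @ [Suc n]))" for y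
    by (rule reval_compI[OF _ E]) (auto intro!: list_all2_appendI projs_all2_2 reval_compI[where ys="[n]"] reval_proj'
        intro: reval_succ[of n "[]", simplified])
  have 2: "reval (Comp add_code [Proj 1, Comp E (map (\<lambda>j. Proj (Suc (Suc j))) [0..<length xs] @ [Comp Succ [Proj 0]])]) (n # y # xs)
      (y + f (xs @ [Suc n]))" for y
    by (rule reval_compI[where ys="[y, f (xs @ [Suc n])]"]) (auto intro!: 1 reval_proj' add_code)
  define y where "y = (if \<exists>i\<le>n. f (xs @ [i]) \<noteq> 0 then 1 else 0 :: nat)"
  have 3: "(if y + f (xs @ [Suc n]) = 0 then 0 else 1) = (if \<exists>i\<le>Suc n. f (xs @ [i]) \<noteq> 0 then 1 else (0::nat))"
  proof (cases "\<exists>i\<le>n. f (xs @ [i]) \<noteq> 0")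
    case True then obtain i where "i \<le> n" "f (xs @ [i]) \<noteq> 0" by blast
    then have "\<exists>i\<le>Suc n. f (xs @ [i]) \<noteq> 0" by (intro exI[of _ i]) simp
    with True show ?thesis unfolding y_def by simp
  next
    case False
    then have "(\<exists>i\<le>Suc n. f (xs @ [i]) \<noteq> 0) \<longleftrightarrow> f (xs @ [Suc n]) \<noteq> 0"
      by (metis le_Suc_eq order_refl)
    moreover have "y = 0" using False unfolding y_def by auto
    ultimately show ?thesis by simp
  qed
  have 4: "reval (be_step (length xs) E) (n # y # xs) (if \<exists>i\<le>Suc n. f (xs @ [i]) \<noteq> 0 then 1 else (0::nat))"
    unfolding be_step_def
    apply (rule reval_compI[where ys="[y + f (xs @ [Suc n])]"])
    using 2[of y] apply simp
    by (rule sg_code'[OF 3[symmetric]])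
  have IH: "reval (Prim (be_base (length xs) E) (be_step (length xs) E)) (n # xs) y"
    using Suc unfolding y_def .
  show ?case
    by (rule reval_primS[OF IH 4])
qed

lemma cmp_correct: "ws k e \<Longrightarrow> length xs = k \<Longrightarrow> reval (cmp k e) xs (ev e xs)"
proof (induction e arbitrary: k xs)
  case (V i) then show ?case by (auto intro: reval_proj')
next
  case (Cn n) then show ?case by (simp add: constc)
next
  case (Add a b) then show ?case by (auto intro!: reval_compI add_code)
next
  case (Mul a b) then show ?case by (auto intro!: reval_compI mul_code)
next
  case (Sub a b) then show ?case by (auto intro!: reval_compI monus_code)
next
  case (Tri a) then show ?case by (auto intro!: reval_compI tri_code)
next
  case (Pw2 a) then show ?case by (auto intro!: reval_compI pw2_code)
next
  case (Sg a) then show ?case by (auto intro!: reval_compI sg_code')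
next
  case (BE b e)
  have k: "k = length xs" using BE.prems(2) by simp
  have w: "ws (Suc (length xs)) e" using BE.prems(1) k by simp
  have E: "reval (cmp (Suc (length xs)) e) ys (ev e ys)" if "length ys = Suc (length xs)" for ys
    using BE.IH(2)[OF w that] .
  note P = be_prim[where f="ev e" and E="cmp (Suc (length xs)) e", OF E]
  have B: "reval (cmp (length xs) b) xs (ev b xs)" using BE.IH(1) BE.prems(1) k by simp
  show ?case
    unfolding k cmp.simps ev.simps
    by (rule reval_compI[where ys="ev b xs # xs", OF _ P]) (simp add: B projs_all2_0)
qed


lemma ce_from_ex:
  assumes "ws 1 X"
  shows "ce_set {n. ev X [n] \<noteq> 0}"
proof -
  define g where "g = Comp (cmp 1 (Sub (Cn 1) (Sg X))) [Proj 1]"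
  have G: "reval g [m, n] (1 - (if ev X [n] = 0 then 0 else 1))" for m n
    unfolding g_def
    apply (rule reval_compI[where ys="[n]"])
     apply (simp add: reval_proj')
    using cmp_correct[of 1 "Sub (Cn 1) (Sg X)" "[n]"] assms by simp
  have "{n. ev X [n] \<noteq> 0} = {n. \<exists>y. reval (Mu g) [n] y}"
  proof (intro set_eqI iffI; simp)
    fix n assume "0 < ev X [n]"
    then have "reval (Mu g) [n] 0" using G[of 0 n] by (intro reval_mu) auto
    then show "\<exists>y. reval (Mu g) [n] y" by blast
  next
    fix n assume "\<exists>y. reval (Mu g) [n] y"
    then obtain y where "reval g [y, n] 0" by (auto elim: reval_MuE)
    with G[of y n] reval_det show "0 < ev X [n]" by (cases "ev X [n] = 0") force+
  qed
  then show ?thesis unfolding ce_set_def by blast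
qed


fun qf :: "ex \<Rightarrow> bool" where
  "qf (BE b e) = False"
| "qf (Add a b) = (qf a \<and> qf b)"
| "qf (Mul a b) = (qf a \<and> qf b)"
| "qf (Sub a b) = (qf a \<and> qf b)"
| "qf (Tri a) = qf a"
| "qf (Pw2 a) = qf a"
| "qf (Sg a) = qf a"
| "qf _ = True"

lemma ev_append: "ws (length xs) e \<Longrightarrow> qf e \<Longrightarrow> ev e (xs @ ys) = ev e xs"
  by (induction e) (auto simp: nth_append)

definition tv where "tv e xs \<longleftrightarrow> ev e xs \<noteq> 0"
definition AndX where "AndX a b = Mul a b"
definition OrX where "OrX a b = Add a b"
definition LtX where "LtX a b = Sg (Sub b a)"
definition EqX where "EqX a b = Sub (Cn 1) (Sg (Add (Sub a b) (Sub b a)))"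
definition PEX where "PEX a b = Add (Tri (Add a b)) a"

lemma tv_simps[simp]:
  "tv (AndX a b) xs \<longleftrightarrow> tv a xs \<and> tv b xs"
  "tv (OrX a b) xs \<longleftrightarrow> tv a xs \<or> tv b xs"
  "tv (LtX a b) xs \<longleftrightarrow> ev a xs < ev b xs"
  "tv (EqX a b) xs \<longleftrightarrow> ev a xs = ev b xs"
  "tv (BE b e) xs \<longleftrightarrow> (\<exists>i\<le>ev b xs. tv e (xs @ [i]))"
  by (auto simp: tv_def AndX_def OrX_def LtX_def EqX_def)

lemma ev_PEX[simp]: "ev (PEX a b) xs = prod_encode (ev a xs, ev b xs)"
  by (simp add: PEX_def prod_encode_def)

lemma ws_X[simp]: "ws k (AndX a b) = (ws k a \<and> ws k b)" "ws k (OrX a b) = (ws k a \<and> ws k b)"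
  "ws k (LtX a b) = (ws k a \<and> ws k b)" "ws k (EqX a b) = (ws k a \<and> ws k b)"
  "ws k (PEX a b) = (ws k a \<and> ws k b)"
  "qf (PEX a b) = (qf a \<and> qf b)"
  by (auto simp: AndX_def OrX_def LtX_def EqX_def PEX_def)

definition memX :: "nat \<Rightarrow> ex \<Rightarrow> ex \<Rightarrow> ex" where
  "memX j K C = BE C (BE C (AndX (EqX C (Add (Mul (Add (Mul (Cn 2) (V j)) (Cn 1)) (Pw2 K)) (V (Suc j))))
      (LtX (V (Suc j)) (Pw2 K))))"

lemma set_decode_arith: "k \<in> set_decode c \<longleftrightarrow> (\<exists>q\<le>c. \<exists>r\<le>c. c = (2*q+1) * 2^k + r \<and> r < 2^k)"
proof
  assume "k \<in> set_decode c"
  then have o: "odd (c div 2^k)" by (simp add: set_decode_def)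
  define q where "q = c div 2^k div 2"
  have "c div 2^k = 2*q+1" using o unfolding q_def by (simp add: odd_two_times_div_two_succ)
  moreover have "c = c div 2^k * 2^k + c mod 2^k" by (rule div_mult_mod_eq[symmetric])
  ultimately have "c = (2*q+1) * 2^k + c mod 2^k" by simp
  moreover have "q \<le> c" unfolding q_def by (meson div_le_dividend order_trans)
  moreover have "c mod 2^k \<le> c" by simp
  moreover have "c mod 2^k < 2^k" by simp
  ultimately show "\<exists>q\<le>c. \<exists>r\<le>c. c = (2*q+1) * 2^k + r \<and> r < 2^k" by blast
next
  assume "\<exists>q\<le>c. \<exists>r\<le>c. c = (2*q+1) * 2^k + r \<and> r < 2^k"
  then obtain q r where "c = (2*q+1) * 2^k + r" "r < 2^k" by blast
  then have "c = (2*q+1) * 2^k + r" by simp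
  then have "c div 2^k = (2*q+1) + r div 2^k" using div_mult_self3[of "2^k::nat" "2*q+1" r] by simp
  with \<open>r < 2^k\<close> have "c div 2^k = 2*q+1" by simp
  then show "k \<in> set_decode c" by (simp add: set_decode_def)
qed

lemma tv_memX:
  assumes "length xs = j" "ws j K" "ws j C" "qf K" "qf C"
  shows "tv (memX j K C) xs \<longleftrightarrow> ev K xs \<in> set_decode (ev C xs)"
proof -
  have 1: "ev K (xs @ [q, r]) = ev K xs" "ev C (xs @ [q, r]) = ev C xs" 
       "ev C (xs @ [q]) = ev C xs" for q r
    using ev_append[of xs K "[q,r]"] ev_append[of xs C "[q,r]"] ev_append[of xs C "[q]"] assms by auto
  show ?thesis
    unfolding memX_def set_decode_arith
    using assms by (simp add: 1 nth_append)
qed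


definition dec_atom :: "nat \<Rightarrow> atom" where
  "dec_atom k = (if even k then Lt (fst (prod_decode (k div 2))) (snd (prod_decode (k div 2)))
                 else Eq (fst (prod_decode (k div 2))) (snd (prod_decode (k div 2))))"
definition dec_basic :: "nat \<Rightarrow> basic" where
  "dec_basic n = (if even n then Pos (dec_atom (n div 2)) else Neg (dec_atom (n div 2)))"

lemma code_dec_atom: "code_atom (dec_atom k) = k"
  by (auto simp: dec_atom_def)

lemma code_dec_basic: "code_basic (dec_basic n) = n"
  by (auto simp: dec_basic_def code_dec_atom)

lemma code_atom_inj: "code_atom x = code_atom y \<Longrightarrow> x = y"
  by (cases x; cases y; simp; presburger)

lemma code_basic_inj: "inj code_basic"
proof (rule injI)
  fix x y assume "code_basic x = code_basic y"
  then show "x = y" by (cases x; cases y; simp; (presburger | metis code_atom_inj))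
qed

lemma code_basic_surj: "surj code_basic"
  by (metis code_dec_basic surjI)

definition ltc :: "nat \<Rightarrow> nat \<Rightarrow> nat \<Rightarrow> bool" where
  "ltc c x y \<longleftrightarrow> 4 * prod_encode (x, y) \<in> set_decode c"

definition E :: "nat \<Rightarrow> nat \<Rightarrow> nat" where "E a w = prod_encode (a, w)"

definition Wt :: "(nat \<Rightarrow> nat \<Rightarrow> bool) \<Rightarrow> nat \<Rightarrow> nat \<Rightarrow> nat \<Rightarrow> bool" where
  "Wt lt a w t \<longleftrightarrow> t < a \<and> ((lt t w \<and> lt w a) \<or> (lt a w \<and> lt w t))"

definition Ok :: "(nat \<Rightarrow> nat \<Rightarrow> bool) \<Rightarrow> basic \<Rightarrow> bool" where
  "Ok lt \<phi> \<longleftrightarrow> (\<exists>a w t. Wt lt a w t \<and> \<phi> = Pos (Eq (E a w) (E a w))) \<or>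
     (\<exists>a w t a' w' t'. Wt lt a w t \<and> Wt lt a' w' t' \<and>
       ((\<phi> = Neg (Eq (E a w) (E a' w')) \<and> (a, w) \<noteq> (a', w')) \<or>
        (\<phi> = Pos (Lt (E a w) (E a' w')) \<and> (lt a a' \<or> (a = a' \<and> lt w w'))) \<or>
        (\<phi> = Neg (Lt (E a w) (E a' w')) \<and> (lt a' a \<or> (a = a' \<and> (lt w' w \<or> w = w'))))))"

definition Gam :: enum_op where
  "Gam = {(\<alpha>, \<phi>). finite \<alpha> \<and> Ok (\<lambda>x y. Pos (Lt x y) \<in> \<alpha>) \<phi>}"

definition OkC :: "(nat \<Rightarrow> nat \<Rightarrow> bool) \<Rightarrow> nat \<Rightarrow> bool" where
  "OkC lt d \<longleftrightarrow> (\<exists>a w t. Wt lt a w t \<and> d = 4 * prod_encode (prod_encode (a, w), prod_encode (a, w)) + 2) \<or>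
     (\<exists>a w t a' w' t'. Wt lt a w t \<and> Wt lt a' w' t' \<and>
       ((d = 4 * prod_encode (prod_encode (a, w), prod_encode (a', w')) + 3 \<and> prod_encode (a, w) \<noteq> prod_encode (a', w')) \<or>
        (d = 4 * prod_encode (prod_encode (a, w), prod_encode (a', w')) \<and> (lt a a' \<or> (a = a' \<and> lt w w'))) \<or>
        (d = 4 * prod_encode (prod_encode (a, w), prod_encode (a', w')) + 1 \<and> (lt a' a \<or> (a = a' \<and> (lt w' w \<or> w = w'))))))"

lemma Ok_OkC: "Ok lt \<phi> \<longleftrightarrow> OkC lt (code_basic \<phi>)"
proof -
  have eq: "\<phi> = \<psi> \<longleftrightarrow> code_basic \<phi> = code_basic \<psi>" for \<psi>
    using code_basic_inj by (auto dest: injD)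
  show ?thesis unfolding Ok_def OkC_def eq by (simp add: E_def numeral_3_eq_3)
qed

lemma Gam_image: "(\<lambda>(\<alpha>, \<phi>). prod_encode (canon (code_basic ` \<alpha>), code_basic \<phi>)) ` Gam
   = {n. \<exists>c d. n = prod_encode (c, d) \<and> OkC (ltc c) d}"
proof (intro set_eqI iffI)
  fix n assume "n \<in> (\<lambda>(\<alpha>, \<phi>). prod_encode (canon (code_basic ` \<alpha>), code_basic \<phi>)) ` Gam"
  then obtain \<alpha> \<phi> where n: "n = prod_encode (canon (code_basic ` \<alpha>), code_basic \<phi>)"
    and f: "finite \<alpha>" and ok: "Ok (\<lambda>x y. Pos (Lt x y) \<in> \<alpha>) \<phi>"
    unfolding Gam_def by auto
  have sd: "set_decode (canon (code_basic ` \<alpha>)) = code_basic ` \<alpha>"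
    using f by (simp add: canon_def set_encode_def[symmetric])
  have lt: "(\<lambda>x y. Pos (Lt x y) \<in> \<alpha>) = ltc (canon (code_basic ` \<alpha>))"
    unfolding ltc_def sd using inj_image_mem_iff[OF code_basic_inj, of "Pos (Lt _ _)" \<alpha>] by (auto simp: fun_eq_iff)
  show "n \<in> {n. \<exists>c d. n = prod_encode (c, d) \<and> OkC (ltc c) d}"
    using n ok unfolding lt Ok_OkC by blast
next
  fix n assume "n \<in> {n. \<exists>c d. n = prod_encode (c, d) \<and> OkC (ltc c) d}"
  then obtain c d where n: "n = prod_encode (c, d)" and ok: "OkC (ltc c) d"
    by blast
  define \<alpha> where "\<alpha> = code_basic -` set_decode c"
  have im: "code_basic ` \<alpha> = set_decode c" unfolding \<alpha>_def using code_basic_surj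
    by (simp add: surj_image_vimage_eq)
  have f: "finite \<alpha>" unfolding \<alpha>_def
    using finite_vimageI[OF finite_set_decode code_basic_inj] .
  have c: "canon (code_basic ` \<alpha>) = c" unfolding im canon_def set_encode_def[symmetric] by simp
  have lt: "(\<lambda>x y. Pos (Lt x y) \<in> \<alpha>) = ltc c"
    unfolding ltc_def \<alpha>_def by (auto simp: fun_eq_iff)
  have "(\<alpha>, dec_basic d) \<in> Gam" unfolding Gam_def using f ok by (simp add: lt Ok_OkC code_dec_basic)
  then show "n \<in> (\<lambda>(\<alpha>, \<phi>). prod_encode (canon (code_basic ` \<alpha>), code_basic \<phi>)) ` Gam"
    using n c code_dec_basic[of d] by (auto intro!: image_eqI[where x="(\<alpha>, dec_basic d)"])
qed


definition cX where "cX r u v = Add (Mul (Cn 4) (PEX u v)) (Cn r)"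
definition ltX where "ltX j x y = memX j (Mul (Cn 4) (PEX (V x) (V y))) (V 1)"
definition WtX where "WtX j a w t = AndX (LtX (V t) (V a))
   (OrX (AndX (ltX j t w) (ltX j w a)) (AndX (ltX j a w) (ltX j w t)))"
definition NeX where "NeX a b = OrX (LtX a b) (LtX b a)"

definition XX where "XX = (let PA = PEX (V 3) (V 4); PB = PEX (V 6) (V 7) in
  BE (V 0) (BE (V 0) (AndX (EqX (V 0) (PEX (V 1) (V 2))) (OrX
    (BE (V 1) (BE (V 1) (BE (V 1) (AndX (WtX 6 3 4 5) (EqX (V 2) (cX 2 PA PA))))))
    (BE (V 1) (BE (V 1) (BE (V 1) (BE (V 1) (BE (V 1) (BE (V 1)
      (AndX (WtX 9 3 4 5) (AndX (WtX 9 6 7 8) (OrX (OrX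
        (AndX (EqX (V 2) (cX 3 PA PB)) (NeX PA PB))
        (AndX (EqX (V 2) (cX 0 PA PB)) (OrX (ltX 9 3 6) (AndX (EqX (V 3) (V 6)) (ltX 9 4 7)))))
        (AndX (EqX (V 2) (cX 1 PA PB)) (OrX (ltX 9 6 3) (AndX (EqX (V 3) (V 6)) (OrX (ltX 9 7 4) (EqX (V 4) (V 7)))))))))))))))))))"

lemma ws_XX: "ws 1 XX"
  by (simp add: XX_def WtX_def ltX_def memX_def cX_def NeX_def Let_def)

lemma tv_ltX: "length xs = j \<Longrightarrow> x < j \<Longrightarrow> y < j \<Longrightarrow> 1 < j \<Longrightarrow>
   tv (ltX j x y) xs \<longleftrightarrow> ltc (xs ! 1) (xs ! x) (xs ! y)"
  unfolding ltX_def ltc_def by (subst tv_memX) auto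

lemma tv_WtX: "length xs = j \<Longrightarrow> a < j \<Longrightarrow> w < j \<Longrightarrow> t < j \<Longrightarrow> 1 < j \<Longrightarrow>
   tv (WtX j a w t) xs \<longleftrightarrow> Wt (ltc (xs ! 1)) (xs ! a) (xs ! w) (xs ! t)"
  unfolding WtX_def Wt_def by (simp add: tv_ltX)

lemma tv_NeX[simp]: "tv (NeX a b) xs \<longleftrightarrow> ev a xs \<noteq> ev b xs"
  unfolding NeX_def by auto

lemma ev_cX[simp]: "ev (cX r u v) xs = 4 * prod_encode (ev u xs, ev v xs) + r"
  unfolding cX_def by simp

definition OkCB :: "nat \<Rightarrow> nat \<Rightarrow> bool" where
  "OkCB c d \<longleftrightarrow> (let lt = ltc c in
    (\<exists>a\<le>c. \<exists>w\<le>c. \<exists>t\<le>c. Wt lt a w t \<and> d = 4 * prod_encode (prod_encode (a, w), prod_encode (a, w)) + 2) \<or>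
     (\<exists>a\<le>c. \<exists>w\<le>c. \<exists>t\<le>c. \<exists>a'\<le>c. \<exists>w'\<le>c. \<exists>t'\<le>c. Wt lt a w t \<and> Wt lt a' w' t' \<and>
       (((d = 4 * prod_encode (prod_encode (a, w), prod_encode (a', w')) + 3 \<and> prod_encode (a, w) \<noteq> prod_encode (a', w')) \<or>
        (d = 4 * prod_encode (prod_encode (a, w), prod_encode (a', w')) \<and> (lt a a' \<or> (a = a' \<and> lt w w')))) \<or>
        (d = 4 * prod_encode (prod_encode (a, w), prod_encode (a', w')) + 1 \<and> (lt a' a \<or> (a = a' \<and> (lt w' w \<or> w = w')))))))"

lemma tv_XX: "tv XX [n] \<longleftrightarrow> (\<exists>c\<le>n. \<exists>d\<le>n. n = prod_encode (c, d) \<and> OkCB c d)"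
  unfolding XX_def OkCB_def Let_def
  by (simp add: tv_WtX tv_ltX)


lemma set_decode_less: "k \<in> set_decode c \<Longrightarrow> k < c"
proof -
  assume "k \<in> set_decode c"
  then obtain q r where "c = (2*q+1) * 2^k + r" unfolding set_decode_arith by blast
  then have "2^k \<le> c" by simp
  moreover have "k < 2^k" by (rule less_exp)
  ultimately show ?thesis by linarith
qed

lemma lt_bound: "ltc c x y \<Longrightarrow> x < c \<and> y < c"
  unfolding ltc_def using set_decode_less[of "4 * prod_encode (x, y)" c] le_prod_encode_1[of x y] le_prod_encode_2[of y x]
  by auto

lemma Wt_bound: "Wt (ltc c) a w t \<Longrightarrow> a \<le> c \<and> w \<le> c \<and> t \<le> c"
  unfolding Wt_def using lt_bound by fastforce

lemma bex_le_I: "x \<le> c \<Longrightarrow> P x \<Longrightarrow> \<exists>x\<le>c. P x"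
  by blast

lemma OkC_OkCB: "OkC (ltc c) d \<longleftrightarrow> OkCB c d"
proof
  assume "OkCB c d" then show "OkC (ltc c) d"
    unfolding OkCB_def OkC_def Let_def by blast
next
  assume "OkC (ltc c) d"
  then show "OkCB c d"
    unfolding OkC_def OkCB_def Let_def
    apply -
    apply (erule disjE)
    subgoal
      apply (elim exE conjE)
      subgoal for a w t using Wt_bound[of c a w t] by blast
      done
    apply (elim exE conjE)
    subgoal for a w t a' w' t'
      using Wt_bound[of c a w t] Wt_bound[of c a' w' t']
      apply -
      apply (rule disjI2)
      apply (rule bex_le_I[of a], simp)
      apply (rule bex_le_I[of w], simp)
      apply (rule bex_le_I[of t], simp)
      apply (rule bex_le_I[of a'], simp)
      apply (rule bex_le_I[of w'], simp)
      apply (rule bex_le_I[of t'], simp)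
      apply (intro conjI, assumption, assumption)
      by (simp only: disj_assoc)
    done
qed

lemma Gam_ce: "ce_set ((\<lambda>(\<alpha>, \<phi>). prod_encode (canon (code_basic ` \<alpha>), code_basic \<phi>)) ` Gam)"
proof -
  have "(\<lambda>(\<alpha>, \<phi>). prod_encode (canon (code_basic ` \<alpha>), code_basic \<phi>)) ` Gam = {n. ev XX [n] \<noteq> 0}"
  proof -
    have "n = prod_encode (c, d) \<Longrightarrow> c \<le> n \<and> d \<le> n" for n c d
      using le_prod_encode_1 le_prod_encode_2 by auto
    then show ?thesis unfolding Gam_image tv_def[symmetric] tv_XX OkC_OkCB by blast
  qed
  then show ?thesis using ce_from_ex[OF ws_XX] by simp
qed

lemma Gam_enum: "enum_operator Gam"
  unfolding enum_operator_def using Gam_ce by (auto simp: Gam_def)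


definition ltA :: "struc \<Rightarrow> nat \<Rightarrow> nat \<Rightarrow> bool" where
  "ltA A x y \<longleftrightarrow> x \<in> fst A \<and> y \<in> fst A \<and> (x, y) \<in> snd A"

definition FD :: "struc \<Rightarrow> nat set" where
  "FD A = {E a w | a w. \<exists>t. Wt (ltA A) a w t}"
definition FR :: "struc \<Rightarrow> (nat \<times> nat) set" where
  "FR A = {(E a w, E a' w') | a w a' w'. (\<exists>t. Wt (ltA A) a w t) \<and> (\<exists>t'. Wt (ltA A) a' w' t') \<and>
      (ltA A a a' \<or> (a = a' \<and> ltA A w w'))}"
definition FF :: "struc \<Rightarrow> struc" where "FF A = (FD A, FR A)"

definition slin :: "struc \<Rightarrow> bool" where
  "slin A \<longleftrightarrow> is_struc A \<and> (\<forall>x. (x, x) \<notin> snd A) \<and>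
     (\<forall>x y z. (x, y) \<in> snd A \<longrightarrow> (y, z) \<in> snd A \<longrightarrow> (x, z) \<in> snd A) \<and>
     (\<forall>x\<in>fst A. \<forall>y\<in>fst A. x \<noteq> y \<longrightarrow> (x, y) \<in> snd A \<or> (y, x) \<in> snd A)"

lemma E_inj[simp]: "E a w = E a' w' \<longleftrightarrow> a = a' \<and> w = w'"
  by (simp add: E_def)

lemma Ok_mono: "Ok lt \<phi> \<Longrightarrow> (\<And>x y. lt x y \<Longrightarrow> lt' x y) \<Longrightarrow> Ok lt' \<phi>"
proof -
  assume ok: "Ok lt \<phi>" and m: "\<And>x y. lt x y \<Longrightarrow> lt' x y"
  have W: "Wt lt a w t \<Longrightarrow> Wt lt' a w t" for a w t unfolding Wt_def using m by blast
  from ok show ?thesis unfolding Ok_def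
    apply -
    apply (erule disjE)
     apply (elim exE conjE) 
    subgoal for a w t using W by blast
    apply (elim exE conjE)
    subgoal for a w t a' w' t' using W[of a w t] W[of a' w' t'] m by blast
    done
qed

lemma Ok_local: "Ok lt \<phi> \<Longrightarrow> \<exists>V. finite V \<and> Ok (\<lambda>x y. x \<in> V \<and> y \<in> V \<and> lt x y) \<phi>"
proof -
  assume ok: "Ok lt \<phi>"
  show ?thesis using ok unfolding Ok_def
    apply -
    apply (erule disjE)
     apply (elim exE conjE) 
    subgoal for a w t
      apply (rule exI[of _ "{a, w, t}"])
      by (auto simp: Wt_def)
    apply (elim exE conjE)
    subgoal for a w t a' w' t'
      apply (rule exI[of _ "{a, w, t, a', w', t'}"])
      apply (rule conjI, simp)
      apply (rule disjI2)
      apply (rule exI[of _ a], rule exI[of _ w], rule exI[of _ t], rule exI[of _ a'], rule exI[of _ w'], rule exI[of _ t'])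
      by (auto simp: Wt_def)
    done
qed

lemma ltA_diag: "Pos (Lt x y) \<in> diag A \<longleftrightarrow> ltA A x y"
  by (auto simp: diag_def ltA_def)

lemma apply_Gam: "apply_op Gam (diag A) = {\<phi>. Ok (ltA A) \<phi>}"
proof (intro set_eqI iffI)
  fix \<phi> assume "\<phi> \<in> apply_op Gam (diag A)"
  then obtain \<alpha> where "finite \<alpha>" "Ok (\<lambda>x y. Pos (Lt x y) \<in> \<alpha>) \<phi>" "\<alpha> \<subseteq> diag A"
    unfolding apply_op_def Gam_def by auto
  then show "\<phi> \<in> {\<phi>. Ok (ltA A) \<phi>}"
    using Ok_mono[of _ \<phi> "ltA A"] ltA_diag by blast
next
  fix \<phi> assume "\<phi> \<in> {\<phi>. Ok (ltA A) \<phi>}"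
  then obtain V where V: "finite V" "Ok (\<lambda>x y. x \<in> V \<and> y \<in> V \<and> ltA A x y) \<phi>"
    using Ok_local by blast
  define \<alpha> where "\<alpha> = (\<lambda>(x, y). Pos (Lt x y)) ` {(x, y). x \<in> V \<and> y \<in> V \<and> ltA A x y}"
  have f: "finite \<alpha>" unfolding \<alpha>_def
    by (rule finite_imageI, rule finite_subset[of _ "V \<times> V"]) (use V in auto)
  have lt: "(\<lambda>x y. Pos (Lt x y) \<in> \<alpha>) = (\<lambda>x y. x \<in> V \<and> y \<in> V \<and> ltA A x y)"
    unfolding \<alpha>_def by (auto simp: fun_eq_iff)
  have sub: "\<alpha> \<subseteq> diag A" unfolding \<alpha>_def by (auto simp: ltA_diag)
  have "(\<alpha>, \<phi>) \<in> Gam" unfolding Gam_def using f V lt by simp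
  then show "\<phi> \<in> apply_op Gam (diag A)" unfolding apply_op_def using sub by blast
qed

lemma Wt_in: "Wt (ltA A) a w t \<Longrightarrow> a \<in> fst A \<and> w \<in> fst A \<and> t \<in> fst A"
  unfolding Wt_def ltA_def by auto

lemma Ok_diag_FF:
  assumes "slin A"
  shows "{\<phi>. Ok (ltA A) \<phi>} = diag (FF A)"
proof -
  have irr: "\<not> ltA A x x" for x using assms unfolding slin_def ltA_def by auto
  have asym: "ltA A x y \<Longrightarrow> \<not> ltA A y x" for x y using assms unfolding slin_def ltA_def by blast
  have tot: "x \<in> fst A \<Longrightarrow> y \<in> fst A \<Longrightarrow> x \<noteq> y \<Longrightarrow> ltA A x y \<or> ltA A y x" for x y
    using assms unfolding slin_def ltA_def by blast
  have notlex: "\<not> (ltA A a a' \<or> (a = a' \<and> ltA A w w')) \<longleftrightarrow> (ltA A a' a \<or> (a = a' \<and> (ltA A w' w \<or> w = w')))"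
    if "a \<in> fst A" "a' \<in> fst A" "w \<in> fst A" "w' \<in> fst A" for a a' w w'
    using that irr asym tot by blast
  show ?thesis
  proof (intro set_eqI iffI)
    fix \<phi> assume "\<phi> \<in> {\<phi>. Ok (ltA A) \<phi>}"
    then show "\<phi> \<in> diag (FF A)"
      unfolding Ok_def
      apply -
      apply simp
      apply (erule disjE)
       apply (elim exE conjE)
      subgoal for a w t unfolding diag_def FF_def FD_def by auto
      apply (elim exE conjE)
      subgoal for a w t a' w' t'
        using notlex[of a a' w w'] Wt_in[of A a w t] Wt_in[of A a' w' t']
        unfolding diag_def FF_def FD_def FR_def by auto
      done
  next
    fix \<phi> assume "\<phi> \<in> diag (FF A)"
    then consider (1) e e' where "e \<in> FD A" "e' \<in> FD A" "(e, e') \<in> FR A" "\<phi> = Pos (Lt e e')"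
      | (2) e e' where "e \<in> FD A" "e' \<in> FD A" "(e, e') \<notin> FR A" "\<phi> = Neg (Lt e e')"
      | (3) e where "e \<in> FD A" "\<phi> = Pos (Eq e e)"
      | (4) e e' where "e \<in> FD A" "e' \<in> FD A" "e \<noteq> e'" "\<phi> = Neg (Eq e e')"
      unfolding diag_def FF_def by auto
    then show "\<phi> \<in> {\<phi>. Ok (ltA A) \<phi>}"
    proof cases
      case 1
      from 1(3) obtain a w t a' w' t' where "e = E a w" "e' = E a' w'" "Wt (ltA A) a w t" "Wt (ltA A) a' w' t'"
        "ltA A a a' \<or> (a = a' \<and> ltA A w w')" unfolding FR_def by auto
      then show ?thesis using 1(4) unfolding Ok_def by blast
    next
      case 2
      from 2(1,2) obtain a w t a' w' t' where h: "e = E a w" "e' = E a' w'" "Wt (ltA A) a w t" "Wt (ltA A) a' w' t'"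
        unfolding FD_def by auto
      with 2(3) have "\<not> (ltA A a a' \<or> (a = a' \<and> ltA A w w'))" unfolding FR_def by blast
      then have "ltA A a' a \<or> (a = a' \<and> (ltA A w' w \<or> w = w'))"
        using notlex[of a a' w w'] Wt_in[OF h(3)] Wt_in[OF h(4)] by blast
      then show ?thesis using 2(4) h unfolding Ok_def by blast
    next
      case 3 then show ?thesis unfolding FD_def Ok_def by blast
    next
      case 4
      from 4(1,2) obtain a w t a' w' t' where h: "e = E a w" "e' = E a' w'" "Wt (ltA A) a w t" "Wt (ltA A) a' w' t'"
        unfolding FD_def by auto
      with 4(3) have "(a, w) \<noteq> (a', w')" by auto
      then show ?thesis using 4(4) h unfolding Ok_def by blast
    qed
  qed
qed


lemma wo_strict:
  fixes R :: "'a rel"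
  assumes sub: "R \<subseteq> S \<times> S" and irr: "\<forall>x. (x, x) \<notin> R" and tr: "trans R"
    and tot: "\<forall>x\<in>S. \<forall>y\<in>S. x \<noteq> y \<longrightarrow> (x, y) \<in> R \<or> (y, x) \<in> R" and wf: "wf R"
  shows "Well_order (R \<union> Id_on S)" "Field (R \<union> Id_on S) = S"
proof -
  show F: "Field (R \<union> Id_on S) = S" using sub by (auto simp: Field_def)
  have "R \<union> Id_on S - Id = R" using irr by auto
  then have w: "wf (R \<union> Id_on S - Id)" using wf by simp
  have "refl_on S (R \<union> Id_on S)" unfolding refl_on_def by auto
  moreover have "trans (R \<union> Id_on S)" using tr unfolding trans_def by blast
  moreover have "antisym (R \<union> Id_on S)" using tr irr unfolding antisym_def trans_def by blast
  moreover have "total_on S (R \<union> Id_on S)" using tot unfolding total_on_def by blast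
  moreover have "R \<union> Id_on S \<subseteq> S \<times> S" using sub by auto
  ultimately show "Well_order (R \<union> Id_on S)" unfolding F
    unfolding well_order_on_def linear_order_on_def partial_order_on_def preorder_on_def
    using w by blast
qed

lemma wo_inflationary:
  assumes W: "Well_order r" and hS: "\<And>x. x \<in> Field r \<Longrightarrow> h x \<in> Field r"
    and hm: "\<And>x y. (x, y) \<in> r \<Longrightarrow> x \<noteq> y \<Longrightarrow> (h x, h y) \<in> r \<and> h x \<noteq> h y"
  shows "x \<in> Field r \<Longrightarrow> (x, h x) \<in> r"
proof -
  have wf: "wf (r - Id)" using W unfolding well_order_on_def by simp
  have tot: "total_on (Field r) r" and anti: "antisym r" and refl: "refl_on (Field r) r"
    using W unfolding well_order_on_def linear_order_on_def partial_order_on_def preorder_on_def by auto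
  show "x \<in> Field r \<Longrightarrow> (x, h x) \<in> r"
  proof (induction x rule: wf_induct[OF wf])
    case (1 x)
    show ?case
    proof (rule ccontr)
      assume n: "(x, h x) \<notin> r"
      have hx: "h x \<in> Field r" using hS 1(2) .
      have ne: "h x \<noteq> x" using n refl 1(2) unfolding refl_on_def by auto
      then have "(h x, x) \<in> r" using tot hx 1(2) n unfolding total_on_def by blast
      then have lt: "(h x, x) \<in> r - Id" using ne by auto
      then have "(h x, h (h x)) \<in> r" using 1(1) hx by blast
      moreover have "(h (h x), h x) \<in> r" "h (h x) \<noteq> h x" using hm[of "h x" x] \<open>(h x, x) \<in> r\<close> ne by auto
      ultimately show False using anti unfolding antisym_def by blast
    qed
  qed
qed

lemma wo_half:
  assumes W1: "Well_order r1" and W2: "Well_order r2" and emb: "embed r1 r2 g"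
    and \<psi>S: "\<And>x. x \<in> Field r2 \<Longrightarrow> \<psi> x \<in> Field r1"
    and \<psi>m: "\<And>x y. (x, y) \<in> r2 \<Longrightarrow> x \<noteq> y \<Longrightarrow> (\<psi> x, \<psi> y) \<in> r1 \<and> \<psi> x \<noteq> \<psi> y"
  shows "BNF_Wellorder_Embedding.iso r1 r2 g"
proof -
  have inj: "inj_on g (Field r1)" using embed_inj_on[OF W1 emb] .
  have comp: "compat r1 r2 g" using embed_compat[OF emb] .
  have of: "wo_rel.ofilter r2 (g ` Field r1)" using embed_Field_ofilter[OF W1 W2 emb] .
  then have ofs: "g ` Field r1 \<subseteq> Field r2" "\<And>a. a \<in> g ` Field r1 \<Longrightarrow> under r2 a \<subseteq> g ` Field r1"
    using W2 unfolding wo_rel.ofilter_def[OF W2[unfolded wo_rel_def[symmetric]]] by auto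
  have gm: "(g x, g y) \<in> r2 \<and> g x \<noteq> g y" if "(x, y) \<in> r1" "x \<noteq> y" for x y
  proof -
    have "x \<in> Field r1" "y \<in> Field r1" using that by (auto intro: FieldI1 FieldI2)
    then show ?thesis using comp that inj unfolding compat_def inj_on_def by blast
  qed
  let ?h = "g \<circ> \<psi>"
  have hS: "?h x \<in> Field r2" if "x \<in> Field r2" for x using ofs(1) \<psi>S[OF that] by auto
  have hm: "(?h x, ?h y) \<in> r2 \<and> ?h x \<noteq> ?h y" if "(x, y) \<in> r2" "x \<noteq> y" for x y
    using gm \<psi>m[OF that] by auto
  have "Field r2 \<subseteq> g ` Field r1"
  proof
    fix y assume y: "y \<in> Field r2"
    have "(y, ?h y) \<in> r2" using wo_inflationary[OF W2 hS hm y] by simp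
    moreover have "?h y \<in> g ` Field r1" using \<psi>S[OF y] by auto
    ultimately show "y \<in> g ` Field r1" using ofs(2) unfolding under_def by blast
  qed
  then have "bij_betw g (Field r1) (Field r2)" using inj ofs(1) unfolding bij_betw_def by auto
  then show ?thesis using emb unfolding BNF_Wellorder_Embedding.iso_def by simp
qed

lemma wo_iso:
  assumes W1: "Well_order r1" and W2: "Well_order r2"
    and \<phi>S: "\<And>x. x \<in> Field r1 \<Longrightarrow> \<phi> x \<in> Field r2"
    and \<phi>m: "\<And>x y. (x, y) \<in> r1 \<Longrightarrow> x \<noteq> y \<Longrightarrow> (\<phi> x, \<phi> y) \<in> r2 \<and> \<phi> x \<noteq> \<phi> y"
    and \<psi>S: "\<And>x. x \<in> Field r2 \<Longrightarrow> \<psi> x \<in> Field r1"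
    and \<psi>m: "\<And>x y. (x, y) \<in> r2 \<Longrightarrow> x \<noteq> y \<Longrightarrow> (\<psi> x, \<psi> y) \<in> r1 \<and> \<psi> x \<noteq> \<psi> y"
  shows "\<exists>h. bij_betw h (Field r1) (Field r2) \<and> (\<forall>a\<in>Field r1. \<forall>b\<in>Field r1. (a, b) \<in> r1 \<longleftrightarrow> (h a, h b) \<in> r2)"
proof -
  from wellorders_totally_ordered[OF W1 W2] show ?thesis
  proof
    assume "\<exists>g. embed r1 r2 g"
    then obtain g where e: "embed r1 r2 g" by blast
    have "BNF_Wellorder_Embedding.iso r1 r2 g" by (rule wo_half[where \<psi>=\<psi>, OF W1 W2 e \<psi>S \<psi>m])
    then show ?thesis unfolding iso_iff2 by blast
  next
    assume "\<exists>g. embed r2 r1 g"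
    then obtain g where e: "embed r2 r1 g" by blast
    have "BNF_Wellorder_Embedding.iso r2 r1 g" by (rule wo_half[where \<psi>=\<phi>, OF W2 W1 e \<phi>S \<phi>m])
    then have b: "bij_betw g (Field r2) (Field r1)" and p: "\<forall>a\<in>Field r2. \<forall>b\<in>Field r2. (a, b) \<in> r2 \<longleftrightarrow> (g a, g b) \<in> r1"
      unfolding iso_iff2 by auto
    let ?h = "inv_into (Field r2) g"
    have bh: "bij_betw ?h (Field r1) (Field r2)" using bij_betw_inv_into[OF b] .
    have "\<forall>a\<in>Field r1. \<forall>b\<in>Field r1. (a, b) \<in> r1 \<longleftrightarrow> (?h a, ?h b) \<in> r2"
    proof (intro ballI)
      fix a b assume a: "a \<in> Field r1" and bb: "b \<in> Field r1"
      have "g (?h a) = a" "g (?h b) = b" using a bb b by (auto simp: bij_betw_inv_into_right)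
      moreover have "?h a \<in> Field r2" "?h b \<in> Field r2" using bh a bb by (auto dest: bij_betwE)
      ultimately show "(a, b) \<in> r1 \<longleftrightarrow> (?h a, ?h b) \<in> r2" using p by metis
    qed
    then show ?thesis using bh by blast
  qed
qed


lemma slin_iso:
  assumes X: "slin X" and Y: "slin Y" and wfY: "wf (snd Y)"
    and \<phi>S: "\<And>x. x \<in> fst X \<Longrightarrow> \<phi> x \<in> fst Y"
    and \<phi>m: "\<And>x y. (x, y) \<in> snd X \<Longrightarrow> (\<phi> x, \<phi> y) \<in> snd Y"
    and \<psi>S: "\<And>x. x \<in> fst Y \<Longrightarrow> \<psi> x \<in> fst X"
    and \<psi>m: "\<And>x y. (x, y) \<in> snd Y \<Longrightarrow> (\<psi> x, \<psi> y) \<in> snd X"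
  shows "iso X Y"
proof -
  obtain S1 R1 where X1: "X = (S1, R1)" by (cases X)
  obtain S2 R2 where Y1: "Y = (S2, R2)" by (cases Y)
  have s1: "R1 \<subseteq> S1 \<times> S1" "\<forall>x. (x, x) \<notin> R1" "trans R1" "\<forall>x\<in>S1. \<forall>y\<in>S1. x \<noteq> y \<longrightarrow> (x, y) \<in> R1 \<or> (y, x) \<in> R1"
    using X unfolding X1 slin_def is_struc_def trans_def by auto
  have s2: "R2 \<subseteq> S2 \<times> S2" "\<forall>x. (x, x) \<notin> R2" "trans R2" "\<forall>x\<in>S2. \<forall>y\<in>S2. x \<noteq> y \<longrightarrow> (x, y) \<in> R2 \<or> (y, x) \<in> R2"
    using Y unfolding Y1 slin_def is_struc_def trans_def by auto
  have wf2: "wf R2" using wfY Y1 by simp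
  have "R1 \<subseteq> inv_image R2 \<phi>" using \<phi>m unfolding X1 Y1 inv_image_def by auto
  then have wf1: "wf R1" using wf_subset[OF wf_inv_image[OF wf2]] by blast
  note W1 = wo_strict[OF s1 wf1] and W2 = wo_strict[OF s2 wf2]
  have "\<exists>h. bij_betw h (Field (R1 \<union> Id_on S1)) (Field (R2 \<union> Id_on S2)) \<and>
     (\<forall>a\<in>Field (R1 \<union> Id_on S1). \<forall>b\<in>Field (R1 \<union> Id_on S1). (a, b) \<in> R1 \<union> Id_on S1 \<longleftrightarrow> (h a, h b) \<in> R2 \<union> Id_on S2)"
  proof (rule wo_iso[OF W1(1) W2(1)])
    show "x \<in> Field (R1 \<union> Id_on S1) \<Longrightarrow> \<phi> x \<in> Field (R2 \<union> Id_on S2)" for x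
      using \<phi>S unfolding W1(2) W2(2) X1 Y1 by simp
    show "x \<in> Field (R2 \<union> Id_on S2) \<Longrightarrow> \<psi> x \<in> Field (R1 \<union> Id_on S1)" for x
      using \<psi>S unfolding W1(2) W2(2) X1 Y1 by simp
    show "(x, y) \<in> R1 \<union> Id_on S1 \<Longrightarrow> x \<noteq> y \<Longrightarrow> (\<phi> x, \<phi> y) \<in> R2 \<union> Id_on S2 \<and> \<phi> x \<noteq> \<phi> y" for x y
      using \<phi>m[of x y] s2(2) unfolding X1 Y1 by auto
    show "(x, y) \<in> R2 \<union> Id_on S2 \<Longrightarrow> x \<noteq> y \<Longrightarrow> (\<psi> x, \<psi> y) \<in> R1 \<union> Id_on S1 \<and> \<psi> x \<noteq> \<psi> y" for x y
      using \<psi>m[of x y] s1(2) unfolding X1 Y1 by auto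
  qed
  then obtain h where b: "bij_betw h S1 S2" and p: "\<forall>a\<in>S1. \<forall>b\<in>S1. (a, b) \<in> R1 \<union> Id_on S1 \<longleftrightarrow> (h a, h b) \<in> R2 \<union> Id_on S2"
    unfolding W1(2) W2(2) by blast
  have "\<forall>a\<in>S1. \<forall>b\<in>S1. (a, b) \<in> R1 \<longleftrightarrow> (h a, h b) \<in> R2"
  proof (intro ballI)
    fix a b assume ab: "a \<in> S1" "b \<in> S1"
    have ha: "h a \<in> S2" "h b \<in> S2" using b ab by (auto dest: bij_betwE)
    have e: "a = b \<longleftrightarrow> h a = h b" using b ab unfolding bij_betw_def inj_on_def by blast
    have pp: "(a, b) \<in> R1 \<union> Id_on S1 \<longleftrightarrow> (h a, h b) \<in> R2 \<union> Id_on S2" using bspec[OF bspec[OF p ab(1)] ab(2)] .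
    show "(a, b) \<in> R1 \<longleftrightarrow> (h a, h b) \<in> R2"
    proof (cases "a = b")
      case True then show ?thesis using s1(2) s2(2) by auto
    next
      case False then have "h a \<noteq> h b" using e by simp
      then show ?thesis using pp False by auto
    qed
  qed
  then have "bij_betw h (fst X) (fst Y) \<and> (\<forall>a\<in>fst X. \<forall>b\<in>fst X. (a, b) \<in> snd X \<longleftrightarrow> (h a, h b) \<in> snd Y)"
    using b unfolding X1 Y1 by simp
  then show ?thesis unfolding Defs.iso_def by (rule exI[of _ h])
qed

definition lexlt :: "nat \<times> nat \<Rightarrow> nat \<times> nat \<Rightarrow> bool" where
  "lexlt p q \<longleftrightarrow> fst p < fst q \<or> (fst p = fst q \<and> snd p < snd q)"

definition lex3 :: "nat \<times> nat \<times> nat \<Rightarrow> nat \<times> nat \<times> nat \<Rightarrow> bool" where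
  "lex3 p q \<longleftrightarrow> fst p < fst q \<or> (fst p = fst q \<and> lexlt (snd p) (snd q))"

lemma dec3_alt: "dec3 x = (fst (prod_decode x), prod_decode (snd (prod_decode x)))"
  by (simp add: case_prod_beta)

declare dec3.simps[simp del]

lemma omega2_rel: "snd omega2 = {(a, b). lexlt (prod_decode a) (prod_decode b)}"
  unfolding omega2_def lexlt_def by (simp add: Let_def case_prod_beta)

lemma omega3_rel: "snd omega3 = {(a, b). lex3 (dec3 a) (dec3 b)}"
  unfolding omega3_def lex3_def lexlt_def by (simp add: Let_def case_prod_beta)

definition enc3 :: "nat \<times> nat \<times> nat \<Rightarrow> nat" where
  "enc3 t = prod_encode (fst t, prod_encode (snd t))"

lemma dec3_enc3[simp]: "dec3 (enc3 t) = t"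
  by (simp add: enc3_def dec3_alt)

lemma enc3_dec3[simp]: "enc3 (dec3 x) = x"
  by (simp add: enc3_def dec3_alt)

lemma dec3_inj: "dec3 x = dec3 y \<Longrightarrow> x = y"
  by (metis enc3_dec3)

lemma slin_omega3: "slin omega3"
proof -
  have "\<forall>x y. lex3 (dec3 x) (dec3 y) \<or> lex3 (dec3 y) (dec3 x) \<or> x = y"
  proof (intro allI)
    fix x y
    show "lex3 (dec3 x) (dec3 y) \<or> lex3 (dec3 y) (dec3 x) \<or> x = y"
      using dec3_inj[of x y] unfolding lex3_def lexlt_def prod_eq_iff by linarith
  qed
  moreover have "\<forall>x. \<not> lex3 (dec3 x) (dec3 x)" unfolding lex3_def lexlt_def by auto
  moreover have "\<forall>x y z. lex3 (dec3 x) (dec3 y) \<longrightarrow> lex3 (dec3 y) (dec3 z) \<longrightarrow> lex3 (dec3 x) (dec3 z)" unfolding lex3_def lexlt_def by auto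
  ultimately show ?thesis
    unfolding slin_def is_struc_def omega3_rel by (auto simp: omega3_def)
qed

lemma wf_omega3: "wf (snd omega3)"
proof -
  have "(dec3 x, dec3 y) \<in> less_than <*lex*> (less_than <*lex*> less_than)" if "(x, y) \<in> snd omega3" for x y
    using that unfolding omega3_rel lex3_def lexlt_def
    by (cases "dec3 x"; cases "dec3 y") auto
  then have "snd omega3 \<subseteq> inv_image (less_than <*lex*> (less_than <*lex*> less_than)) dec3"
    unfolding inv_image_def by auto
  then show ?thesis by (rule wf_subset[rotated]) (intro wf_inv_image wf_lex_prod wf_less_than)
qed


lemma lexlt_irr: "\<not> lexlt p p" by (simp add: lexlt_def)
lemma lexlt_trans: "lexlt p q \<Longrightarrow> lexlt q r \<Longrightarrow> lexlt p r" by (auto simp: lexlt_def)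
lemma lexlt_total: "p \<noteq> q \<Longrightarrow> lexlt p q \<or> lexlt q p"
  by (cases p; cases q) (auto simp: lexlt_def nat_neq_iff)

locale pres =
  fixes A :: struc and g :: "nat \<Rightarrow> nat \<times> nat"
  assumes bij: "bij_betw g (fst A) UNIV"
    and L: "\<And>x y. ltA A x y \<longleftrightarrow> x \<in> fst A \<and> y \<in> fst A \<and> lexlt (g x) (g y)"
begin

abbreviation "D \<equiv> fst A"
definition gi where "gi = inv_into D g"

lemma gi_in: "gi p \<in> D" unfolding gi_def using bij
  by (metis UNIV_I bij_betw_def inv_into_into)
lemma g_gi[simp]: "g (gi p) = p" unfolding gi_def using bij
  by (simp add: bij_betw_inv_into_right)
lemma gi_g[simp]: "x \<in> D \<Longrightarrow> gi (g x) = x" unfolding gi_def using bij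
  by (simp add: bij_betw_inv_into_left)
lemma g_inj: "x \<in> D \<Longrightarrow> y \<in> D \<Longrightarrow> g x = g y \<Longrightarrow> x = y"
  using bij unfolding bij_betw_def inj_on_def by blast

lemma Wt_D: "Wt (ltA A) a w t \<Longrightarrow> a \<in> D \<and> w \<in> D \<and> t \<in> D"
  unfolding Wt_def L by auto

lemma slin_FF: "slin (FF A)"
proof -
  have irr: "(x, x) \<notin> FR A" for x unfolding FR_def by (auto simp: L lexlt_irr)
  have tr: "(x, z) \<in> FR A" if "(x, y) \<in> FR A" "(y, z) \<in> FR A" for x y z
  proof -
    from that(1) obtain a w a' w' t t' where 1: "x = E a w" "y = E a' w'" "Wt (ltA A) a w t" "Wt (ltA A) a' w' t'"
       "ltA A a a' \<or> (a = a' \<and> ltA A w w')" unfolding FR_def by blast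
    from that(2) obtain b v b' v' s s' where 2: "y = E b v" "z = E b' v'" "Wt (ltA A) b v s" "Wt (ltA A) b' v' s'"
       "ltA A b b' \<or> (b = b' \<and> ltA A v v')" unfolding FR_def by blast
    have e: "b = a'" "v = w'" using 1(2) 2(1) by auto
    have "ltA A a b' \<or> (a = b' \<and> ltA A w v')"
      using 1(5) 2(5) unfolding e L by (auto intro: lexlt_trans)
    then show ?thesis unfolding FR_def using 1 2 by blast
  qed
  have tot: "(x, y) \<in> FR A \<or> (y, x) \<in> FR A" if "x \<in> FD A" "y \<in> FD A" "x \<noteq> y" for x y
  proof -
    from that(1) obtain a w t where 1: "x = E a w" "Wt (ltA A) a w t" unfolding FD_def by blast
    from that(2) obtain a' w' t' where 2: "y = E a' w'" "Wt (ltA A) a' w' t'" unfolding FD_def by blast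
    have D: "a \<in> D" "w \<in> D" "a' \<in> D" "w' \<in> D" using Wt_D[OF 1(2)] Wt_D[OF 2(2)] by auto
    have "(ltA A a a' \<or> (a = a' \<and> ltA A w w')) \<or> (ltA A a' a \<or> (a' = a \<and> ltA A w' w))"
    proof (cases "a = a'")
      case True
      then have "w \<noteq> w'" using that(3) 1 2 by auto
      then have "g w \<noteq> g w'" using D g_inj by blast
      then show ?thesis using True lexlt_total D unfolding L by blast
    next
      case False
      then have "g a \<noteq> g a'" using D g_inj by blast
      then show ?thesis using lexlt_total D unfolding L by blast
    qed
    then show ?thesis unfolding FR_def using 1 2 by blast
  qed
  have sub: "FR A \<subseteq> FD A \<times> FD A" unfolding FR_def FD_def by blast
  show ?thesis unfolding slin_def is_struc_def FF_def using irr sub tot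
    by (auto intro: tr)
qed


definition d0 where "d0 = (LEAST x. x \<in> D)"
definition j0 where "j0 = fst (g d0)"

lemma D_ne: "gi (0, 0) \<in> D" by (rule gi_in)
lemma d0_in: "d0 \<in> D" unfolding d0_def using D_ne by (rule LeastI)
lemma d0_le: "x \<in> D \<Longrightarrow> d0 \<le> x" unfolding d0_def by (rule Least_le)

definition psi :: "nat \<Rightarrow> nat" where
  "psi x = E (gi (fst (dec3 x) + j0 + 2, fst (snd (dec3 x)))) (gi (fst (dec3 x) + j0 + 1, snd (snd (dec3 x))))"

lemma psi_Wt: "Wt (ltA A) (gi (m + j0 + 2, n)) (gi (m + j0 + 1, p)) d0"
proof -
  let ?a = "gi (m + j0 + 2, n)" and ?w = "gi (m + j0 + 1, p)"
  have "fst (g ?a) \<noteq> j0" by simp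
  then have "d0 \<noteq> ?a" unfolding j0_def by metis
  then have "d0 < ?a" by (rule le_neq_implies_less[OF d0_le[OF gi_in]])
  moreover have "ltA A d0 ?w" unfolding L using d0_in gi_in by (simp add: lexlt_def j0_def)
  moreover have "ltA A ?w ?a" unfolding L using gi_in by (simp add: lexlt_def)
  ultimately show ?thesis unfolding Wt_def by blast
qed

lemma psi_S: "psi x \<in> FD A"
  unfolding psi_def FD_def using psi_Wt by blast

lemma psi_m: "(x, y) \<in> snd omega3 \<Longrightarrow> (psi x, psi y) \<in> FR A"
proof -
  assume "(x, y) \<in> snd omega3"
  then have l: "lex3 (dec3 x) (dec3 y)" unfolding omega3_rel by simp
  obtain m n p where x: "dec3 x = (m, n, p)" by (cases "dec3 x") auto
  obtain m' n' p' where y: "dec3 y = (m', n', p')" by (cases "dec3 y") auto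
  let ?a = "gi (m + j0 + 2, n)" and ?w = "gi (m + j0 + 1, p)"
  let ?a' = "gi (m' + j0 + 2, n')" and ?w' = "gi (m' + j0 + 1, p')"
  have "ltA A ?a ?a' \<or> (?a = ?a' \<and> ltA A ?w ?w')"
    using l unfolding x y lex3_def lexlt_def L using gi_in by auto
  then show ?thesis unfolding psi_def x y FR_def using psi_Wt by auto
qed

definition B :: "nat \<Rightarrow> nat" where
  "B a = Max ((\<lambda>x. fst (g x)) ` {x \<in> D. x \<le> a})"

lemma B_ge: "z \<in> D \<Longrightarrow> z \<le> a \<Longrightarrow> fst (g z) \<le> B a"
  unfolding B_def by (rule Max_ge) (auto intro: finite_subset[of _ "{..a}"])

lemma Wt_B: "Wt (ltA A) a w t \<Longrightarrow> fst (g w) \<le> B a"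
proof -
  assume W: "Wt (ltA A) a w t"
  then have D: "a \<in> D" "w \<in> D" "t \<in> D" using Wt_D by auto
  from W have ta: "t < a" and c: "(ltA A t w \<and> ltA A w a) \<or> (ltA A a w \<and> ltA A w t)" unfolding Wt_def by auto
  from c show ?thesis
  proof
    assume "ltA A t w \<and> ltA A w a"
    then have "fst (g w) \<le> fst (g a)" unfolding L lexlt_def by auto
    also have "\<dots> \<le> B a" using B_ge[OF D(1)] by simp
    finally show ?thesis .
  next
    assume "ltA A a w \<and> ltA A w t"
    then have "fst (g w) \<le> fst (g t)" unfolding L lexlt_def by auto
    also have "\<dots> \<le> B a" using B_ge[OF D(3)] ta by simp
    finally show ?thesis .
  qed
qed

definition S :: "nat \<Rightarrow> nat \<Rightarrow> nat" where
  "S m n = (\<Sum>i<n. B (gi (m, i)) + 1)"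

lemma S_Suc: "S m (Suc n) = S m n + B (gi (m, n)) + 1"
  unfolding S_def by simp

lemma S_mono: "n \<le> n' \<Longrightarrow> S m n \<le> S m n'"
  unfolding S_def by (rule sum_mono2) auto

definition phi0 :: "nat \<Rightarrow> nat \<Rightarrow> nat" where
  "phi0 a w = enc3 (fst (g a), S (fst (g a)) (snd (g a)) + fst (g w), snd (g w))"

definition phi :: "nat \<Rightarrow> nat" where
  "phi e = phi0 (fst (prod_decode e)) (snd (prod_decode e))"

lemma phi_E[simp]: "phi (E a w) = phi0 a w"
  unfolding phi_def E_def by simp

lemma phi_m: "(x, y) \<in> FR A \<Longrightarrow> (phi x, phi y) \<in> snd omega3"
proof -
  assume "(x, y) \<in> FR A"
  then obtain a w a' w' t t' where 1: "x = E a w" "y = E a' w'" "Wt (ltA A) a w t" "Wt (ltA A) a' w' t'"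
       and c: "ltA A a a' \<or> (a = a' \<and> ltA A w w')" unfolding FR_def by blast
  have Da: "a \<in> D" using Wt_D[OF 1(3)] by simp
  obtain m n where a: "g a = (m, n)" by (cases "g a") auto
  obtain m' n' where a': "g a' = (m', n')" by (cases "g a'") auto
  obtain j k where w: "g w = (j, k)" by (cases "g w") auto
  obtain j' k' where w': "g w' = (j', k')" by (cases "g w'") auto
  have jB: "j \<le> B (gi (m, n))" using Wt_B[OF 1(3)] a w gi_g[OF Da] by simp
  have "lex3 (m, S m n + j, k) (m', S m' n' + j', k')"
    using c
  proof
    assume "ltA A a a'"
    then have "m < m' \<or> (m = m' \<and> n < n')" unfolding L lexlt_def a a' by auto
    then show ?thesis
    proof
      assume "m < m'" then show ?thesis unfolding lex3_def by simp
    next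
      assume mn: "m = m' \<and> n < n'"
      have "S m n + j < S m (Suc n)" using jB S_Suc by simp
      also have "\<dots> \<le> S m n'" using S_mono mn by simp
      finally show ?thesis using mn unfolding lex3_def lexlt_def by simp
    qed
  next
    assume "a = a' \<and> ltA A w w'"
    then show ?thesis using a a' unfolding L lexlt_def lex3_def w w' by auto
  qed
  then show ?thesis unfolding omega3_rel 1 using a a' w w' by (simp add: phi0_def)
qed

lemma iso_FF: "iso (FF A) omega3"
proof (rule slin_iso[where \<phi>=phi and \<psi>=psi, OF slin_FF slin_omega3 wf_omega3])
  have f3: "fst omega3 = UNIV" by (simp add: omega3_def)
  show "x \<in> fst (FF A) \<Longrightarrow> phi x \<in> fst omega3" for x by (simp add: f3)
  show "(x, y) \<in> snd (FF A) \<Longrightarrow> (phi x, phi y) \<in> snd omega3" for x y using phi_m by (simp add: FF_def)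
  show "x \<in> fst omega3 \<Longrightarrow> psi x \<in> fst (FF A)" for x using psi_S by (simp add: FF_def)
  show "(x, y) \<in> snd omega3 \<Longrightarrow> (psi x, psi y) \<in> snd (FF A)" for x y using psi_m by (simp add: FF_def)
qed

end


lemma iso_sym: "iso X Y \<Longrightarrow> iso Y X"
proof -
  assume "iso X Y"
  then obtain f where b: "bij_betw f (fst X) (fst Y)"
    and p: "\<forall>a\<in>fst X. \<forall>b\<in>fst X. (a, b) \<in> snd X \<longleftrightarrow> (f a, f b) \<in> snd Y" unfolding Defs.iso_def by blast
  let ?h = "inv_into (fst X) f"
  have bh: "bij_betw ?h (fst Y) (fst X)" using bij_betw_inv_into[OF b] .
  have "\<forall>a\<in>fst Y. \<forall>b\<in>fst Y. (a, b) \<in> snd Y \<longleftrightarrow> (?h a, ?h b) \<in> snd X"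
  proof (intro ballI)
    fix a b assume a: "a \<in> fst Y" and bb: "b \<in> fst Y"
    have "f (?h a) = a" "f (?h b) = b" using a bb b by (auto simp: bij_betw_inv_into_right)
    moreover have "?h a \<in> fst X" "?h b \<in> fst X" using bh a bb by (auto dest: bij_betwE)
    ultimately show "(a, b) \<in> snd Y \<longleftrightarrow> (?h a, ?h b) \<in> snd X" using p by metis
  qed
  then show ?thesis using bh unfolding Defs.iso_def by blast
qed

lemma iso_trans: "iso X Y \<Longrightarrow> iso Y Z \<Longrightarrow> iso X Z"
proof -
  assume "iso X Y" "iso Y Z"
  then obtain f h where b: "bij_betw f (fst X) (fst Y)"
    and p: "\<forall>a\<in>fst X. \<forall>b\<in>fst X. (a, b) \<in> snd X \<longleftrightarrow> (f a, f b) \<in> snd Y"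
    and b2: "bij_betw h (fst Y) (fst Z)"
    and p2: "\<forall>a\<in>fst Y. \<forall>b\<in>fst Y. (a, b) \<in> snd Y \<longleftrightarrow> (h a, h b) \<in> snd Z" unfolding Defs.iso_def by blast
  have "bij_betw (h \<circ> f) (fst X) (fst Z)" using bij_betw_trans[OF b b2] .
  moreover have "\<forall>a\<in>fst X. \<forall>b\<in>fst X. (a, b) \<in> snd X \<longleftrightarrow> ((h \<circ> f) a, (h \<circ> f) b) \<in> snd Z"
    using p p2 b by (auto dest: bij_betwE)
  ultimately show ?thesis unfolding Defs.iso_def by blast
qed

lemma reverse_reverse[simp]: "reverse (reverse X) = X"
  by (cases X) (auto simp: reverse_def)

lemma iso_reverse: "iso X Y \<Longrightarrow> iso (reverse X) (reverse Y)"
  unfolding Defs.iso_def reverse_def by auto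

lemma is_struc_reverse[simp]: "is_struc (reverse X) \<longleftrightarrow> is_struc X"
  unfolding is_struc_def reverse_def by auto

lemma slin_reverse: "slin X \<Longrightarrow> slin (reverse X)"
  unfolding slin_def reverse_def is_struc_def by auto

lemma ltA_reverse: "ltA (reverse X) x y \<longleftrightarrow> ltA X y x"
  unfolding ltA_def reverse_def by auto

lemma Wt_flip: "Wt (\<lambda>x y. lt y x) a w t \<longleftrightarrow> Wt lt a w t"
  unfolding Wt_def by auto

lemma FF_reverse: "FF (reverse X) = reverse (FF X)"
proof -
  have lt: "ltA (reverse X) = (\<lambda>x y. ltA X y x)" by (auto simp: fun_eq_iff ltA_reverse)
  have 1: "FD (reverse X) = FD X" unfolding FD_def lt Wt_flip[of "ltA X"] ..
  have 2: "FR (reverse X) = {(b, a). (a, b) \<in> FR X}"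
  proof (intro set_eqI iffI)
    fix p assume "p \<in> FR (reverse X)"
    then obtain a w a' w' where h: "p = (E a w, E a' w')" "Ex (Wt (ltA X) a w)" "Ex (Wt (ltA X) a' w')"
      "ltA X a' a \<or> (a = a' \<and> ltA X w' w)" unfolding FR_def lt Wt_flip[of "ltA X"] by blast
    have "(E a' w', E a w) \<in> FR X" unfolding FR_def using h(2-4) by auto
    then show "p \<in> {(b, a). (a, b) \<in> FR X}" using h(1) by simp
  next
    fix p assume "p \<in> {(b, a). (a, b) \<in> FR X}"
    then have "(snd p, fst p) \<in> FR X" by auto
    then obtain a w a' w' where h: "(snd p, fst p) = (E a w, E a' w')" "Ex (Wt (ltA X) a w)" "Ex (Wt (ltA X) a' w')"
      "ltA X a a' \<or> (a = a' \<and> ltA X w w')" unfolding FR_def by blast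
    have "(E a' w', E a w) \<in> FR (reverse X)" unfolding FR_def lt Wt_flip[of "ltA X"] using h(2-4) by auto
    then show "p \<in> FR (reverse X)" using h(1) by (cases p) simp
  qed
  show ?thesis unfolding FF_def 1 2 by (simp add: reverse_def)
qed

lemma diag_inj: "is_struc X \<Longrightarrow> is_struc Y \<Longrightarrow> diag X = diag Y \<Longrightarrow> X = Y"
proof -
  assume sx: "is_struc X" and sy: "is_struc Y" and d: "diag X = diag Y"
  have f: "fst X = fst Y"
  proof -
    have "a \<in> fst X \<longleftrightarrow> Pos (Eq a a) \<in> diag X" for a by (auto simp: diag_def)
    moreover have "a \<in> fst Y \<longleftrightarrow> Pos (Eq a a) \<in> diag Y" for a by (auto simp: diag_def)
    ultimately show ?thesis using d by blast
  qed
  have s: "snd X = snd Y"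
  proof -
    have "p \<in> snd X \<longleftrightarrow> Pos (Lt (fst p) (snd p)) \<in> diag X" for p using sx by (auto simp: diag_def is_struc_def)
    moreover have "p \<in> snd Y \<longleftrightarrow> Pos (Lt (fst p) (snd p)) \<in> diag Y" for p using sy by (auto simp: diag_def is_struc_def)
    ultimately show ?thesis using d by blast
  qed
  show ?thesis using f s by (simp add: prod_eq_iff)
qed

definition has_least :: "struc \<Rightarrow> bool" where
  "has_least X \<longleftrightarrow> (\<exists>x\<in>fst X. \<forall>z\<in>fst X. z \<noteq> x \<longrightarrow> (x, z) \<in> snd X)"

lemma has_least_iso: "iso X Y \<Longrightarrow> has_least X \<Longrightarrow> has_least Y"
proof -
  assume "iso X Y" "has_least X"
  then obtain f x where b: "bij_betw f (fst X) (fst Y)"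
    and p: "\<forall>a\<in>fst X. \<forall>b\<in>fst X. (a, b) \<in> snd X \<longleftrightarrow> (f a, f b) \<in> snd Y"
    and x: "x \<in> fst X" "\<forall>z\<in>fst X. z \<noteq> x \<longrightarrow> (x, z) \<in> snd X" unfolding Defs.iso_def has_least_def by blast
  have "\<forall>z\<in>fst Y. z \<noteq> f x \<longrightarrow> (f x, z) \<in> snd Y"
  proof (intro ballI impI)
    fix z assume z: "z \<in> fst Y" "z \<noteq> f x"
    then obtain y where y: "y \<in> fst X" "z = f y" using b unfolding bij_betw_def by auto
    then have "y \<noteq> x" using z by auto
    then show "(f x, z) \<in> snd Y" using x y p by blast
  qed
  moreover have "f x \<in> fst Y" using b x by (auto dest: bij_betwE)
  ultimately show ?thesis unfolding has_least_def by blast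
qed

lemma fst_omega3[simp]: "fst omega3 = UNIV" by (simp add: omega3_def)
lemma fst_omega2[simp]: "fst omega2 = UNIV" by (simp add: omega2_def)
lemma fst_reverse[simp]: "fst (reverse X) = fst X" by (simp add: reverse_def)
lemma snd_reverse: "(a, b) \<in> snd (reverse X) \<longleftrightarrow> (b, a) \<in> snd X" by (simp add: reverse_def)

lemma pe00: "prod_encode (0, 0) = 0" by (simp add: prod_encode_def)
lemma pd0: "prod_decode 0 = (0, 0)" using prod_encode_inverse[of "(0,0)"] pe00 by simp

lemma omega2_least: "has_least omega2"
proof -
  have "(0, z) \<in> snd omega2" if "z \<noteq> 0" for z
  proof -
    have "prod_decode z \<noteq> (0, 0)"
    proof
      assume "prod_decode z = (0, 0)"
      then have "prod_encode (prod_decode z) = 0" using pe00 by simp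
      then show False using that by simp
    qed
    then show ?thesis unfolding omega2_rel lexlt_def
      by (cases "prod_decode z") (auto simp: pd0)
  qed
  then show ?thesis unfolding has_least_def by (intro bexI[of _ 0]) auto
qed

lemma rev_omega2_no_least: "\<not> has_least (reverse omega2)"
proof
  assume "has_least (reverse omega2)"
  then obtain x where x: "\<forall>z. z \<noteq> x \<longrightarrow> (z, x) \<in> snd omega2"
    unfolding has_least_def by (auto simp: snd_reverse)
  let ?z = "prod_encode (Suc (fst (prod_decode x)), 0)"
  have "fst (prod_decode ?z) \<noteq> fst (prod_decode x)" by simp
  then have "?z \<noteq> x" by metis
  then have "(?z, x) \<in> snd omega2" using x by blast
  then show False unfolding omega2_rel lexlt_def by simp
qed

lemma omega3_least: "has_least omega3"
proof -
  have d0: "dec3 0 = (0, 0, 0)" by (simp add: dec3_alt pd0)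
  have e0: "enc3 (0, 0, 0) = 0" by (simp add: enc3_def pe00)
  have "(0, z) \<in> snd omega3" if "z \<noteq> 0" for z
  proof -
    have "dec3 z \<noteq> (0, 0, 0)"
    proof
      assume "dec3 z = (0, 0, 0)"
      then have "enc3 (dec3 z) = 0" using e0 by simp
      then show False using that by simp
    qed
    then show ?thesis unfolding omega3_rel lex3_def lexlt_def
      by (cases "dec3 z") (auto simp: d0)
  qed
  then show ?thesis unfolding has_least_def by (intro bexI[of _ 0]) auto
qed

lemma rev_omega3_no_least: "\<not> has_least (reverse omega3)"
proof
  assume "has_least (reverse omega3)"
  then obtain x where x: "\<forall>z. z \<noteq> x \<longrightarrow> (z, x) \<in> snd omega3"
    unfolding has_least_def by (auto simp: snd_reverse)
  let ?z = "enc3 (Suc (fst (dec3 x)), 0, 0)"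
  have "fst (dec3 ?z) \<noteq> fst (dec3 x)" by simp
  then have "?z \<noteq> x" by metis
  then have "(?z, x) \<in> snd omega3" using x by blast
  then show False unfolding omega3_rel lex3_def lexlt_def by simp
qed

lemma not_iso2: "\<not> iso omega2 (reverse omega2)"
  using has_least_iso omega2_least rev_omega2_no_least by blast

lemma not_iso3: "\<not> iso omega3 (reverse omega3)"
  using has_least_iso omega3_least rev_omega3_no_least by blast


lemma pres_of_iso:
  assumes s: "is_struc A" and i: "iso A omega2"
  shows "\<exists>g. pres A g"
proof -
  obtain f where b: "bij_betw f (fst A) UNIV"
    and p: "\<forall>a\<in>fst A. \<forall>b\<in>fst A. (a, b) \<in> snd A \<longleftrightarrow> (f a, f b) \<in> snd omega2"
    using i unfolding Defs.iso_def by auto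
  have bg: "bij_betw (prod_decode \<circ> f) (fst A) UNIV"
    using bij_betw_trans[OF b bij_prod_decode] .
  have "ltA A x y \<longleftrightarrow> x \<in> fst A \<and> y \<in> fst A \<and> lexlt ((prod_decode \<circ> f) x) ((prod_decode \<circ> f) y)" for x y
    unfolding ltA_def using p by (auto simp: omega2_rel)
  then have "pres A (prod_decode \<circ> f)" using bg by (unfold_locales) auto
  then show ?thesis by blast
qed

lemma (in pres) slin_A: "is_struc A \<Longrightarrow> slin A"
proof -
  assume s: "is_struc A"
  have lt: "(x, y) \<in> snd A \<longleftrightarrow> x \<in> D \<and> y \<in> D \<and> lexlt (g x) (g y)" for x y
    using L[of x y] s unfolding ltA_def is_struc_def by auto
  show ?thesis unfolding slin_def
  proof (intro conjI allI impI ballI)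
    show "is_struc A" by fact
    show "(x, x) \<notin> snd A" for x unfolding lt by (simp add: lexlt_irr)
    show "(x, z) \<in> snd A" if "(x, y) \<in> snd A" "(y, z) \<in> snd A" for x y z
      using that unfolding lt by (blast intro: lexlt_trans)
    show "(x, y) \<in> snd A \<or> (y, x) \<in> snd A" if "x \<in> D" "y \<in> D" "x \<noteq> y" for x y
    proof -
      have "g x \<noteq> g y" using that g_inj by blast
      then show ?thesis unfolding lt using that lexlt_total by blast
    qed
  qed
qed

lemma good: "is_struc A \<Longrightarrow> iso A omega2 \<Longrightarrow> slin A \<and> iso (FF A) omega3"
proof -
  assume s: "is_struc A" and i: "iso A omega2"
  obtain g where "pres A g" using pres_of_iso[OF s i] by blast
  then interpret pres A g .
  show ?thesis using slin_A[OF s] iso_FF by simp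
qed

lemma is_struc_FF: "is_struc (FF A)"
  unfolding is_struc_def FF_def FR_def FD_def by auto

definition K0 where "K0 = class2 omega2 (reverse omega2)"
definition K1 where "K1 = class2 omega3 (reverse omega3)"

lemma FF_props:
  assumes A: "A \<in> K0"
  shows "apply_op Gam (diag A) = diag (FF A) \<and> FF A \<in> K1 \<and>
    (iso (FF A) omega3 \<longleftrightarrow> iso A omega2) \<and>
    ((iso A omega2 \<and> \<not> iso A (reverse omega2)) \<or> (iso A (reverse omega2) \<and> \<not> iso A omega2)) \<and>
    ((iso (FF A) omega3 \<and> \<not> iso (FF A) (reverse omega3)) \<or> (iso (FF A) (reverse omega3) \<and> \<not> iso (FF A) omega3))"
proof -
  have s: "is_struc A" and c: "iso A omega2 \<or> iso A (reverse omega2)"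
    using A unfolding K0_def class2_def by auto
  have ex2: "\<not> (iso X omega2 \<and> iso X (reverse omega2))" for X
    using not_iso2 iso_sym iso_trans by blast
  have ex3: "\<not> (iso X omega3 \<and> iso X (reverse omega3))" for X
    using not_iso3 iso_sym iso_trans by blast
  have main: "slin A \<and> (iso A omega2 \<longrightarrow> iso (FF A) omega3) \<and> (iso A (reverse omega2) \<longrightarrow> iso (FF A) (reverse omega3))"
    using c
  proof
    assume i: "iso A omega2"
    then have "slin A" "iso (FF A) omega3" using good[OF s] by auto
    moreover have "\<not> iso A (reverse omega2)" using ex2 i by blast
    ultimately show ?thesis by blast
  next
    assume i: "iso A (reverse omega2)"
    let ?A' = "reverse A"
    have s': "is_struc ?A'" using s by simp
    have i': "iso ?A' omega2" using iso_reverse[OF i] by simp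
    have g: "slin ?A'" "iso (FF ?A') omega3" using good[OF s' i'] by auto
    have "slin A" using slin_reverse[OF g(1)] by simp
    moreover have "iso (FF A) (reverse omega3)"
      using iso_reverse[OF g(2)] FF_reverse[of ?A'] by simp
    moreover have "\<not> iso A omega2" using ex2 i by blast
    ultimately show ?thesis by blast
  qed
  have ap: "apply_op Gam (diag A) = diag (FF A)"
    using apply_Gam Ok_diag_FF main by simp
  have k1: "FF A \<in> K1" unfolding K1_def class2_def using is_struc_FF main c by blast
  show ?thesis using ap k1 main c ex2 ex3 by blast
qed

lemma two_class:
  assumes "(iso X P \<and> \<not> iso X Q) \<or> (iso X Q \<and> \<not> iso X P)"
    and "(iso Y P \<and> \<not> iso Y Q) \<or> (iso Y Q \<and> \<not> iso Y P)"
  shows "iso X Y \<longleftrightarrow> (iso X P \<longleftrightarrow> iso Y P)"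
  using assms iso_sym iso_trans by blast

theorem theorem6p2:
  shows "class2 omega2 (reverse omega2) \<le>\<^sub>c class2 omega3 (reverse omega3)"
  unfolding c_reducible_def K0_def[symmetric] K1_def[symmetric]
proof (rule exI[of _ Gam], unfold computable_embedding_def, intro conjI ballI impI)
  show "enum_operator Gam" by (rule Gam_enum)
  show "\<exists>C\<in>K1. apply_op Gam (diag A) = diag C" if "A \<in> K0" for A
    using FF_props[OF that] by blast
  fix A B CA CB assume A: "A \<in> K0" and B: "B \<in> K0" and CA: "CA \<in> K1" and CB: "CB \<in> K1"
    and ea: "apply_op Gam (diag A) = diag CA" and eb: "apply_op Gam (diag B) = diag CB"
  have sCA: "is_struc CA" and sCB: "is_struc CB" using CA CB unfolding K1_def class2_def by auto
  have "CA = FF A" using diag_inj[OF sCA is_struc_FF] ea FF_props[OF A] by simp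
  moreover have "CB = FF B" using diag_inj[OF sCB is_struc_FF] eb FF_props[OF B] by simp
  moreover have "iso A B \<longleftrightarrow> iso (FF A) (FF B)"
  proof -
    have "iso A B \<longleftrightarrow> (iso A omega2 \<longleftrightarrow> iso B omega2)"
      by (rule two_class) (use FF_props[OF A] FF_props[OF B] in blast)+
    also have "\<dots> \<longleftrightarrow> (iso (FF A) omega3 \<longleftrightarrow> iso (FF B) omega3)"
      using FF_props[OF A] FF_props[OF B] by blast
    also have "\<dots> \<longleftrightarrow> iso (FF A) (FF B)"
      by (rule two_class[symmetric]) (use FF_props[OF A] FF_props[OF B] in blast)+
    finally show ?thesis .
  qed
  ultimately show "iso A B \<longleftrightarrow> iso CA CB" by simp
qed


end
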